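(* For $n\geq5$, \[\frac{n+2}{n}\leq \frac{\ell_{n-1}(n)}{\ell_{n-2}(n)}\leq \frac{4n+7}{4n-2}.\]
   Context: For $0\leq i\leq 2n$, $\ell_i(n)$ denotes the number of vectors in $\{0,1,2\}^n$ whose coordinates sum to $i$. *)

theory Defs
  imports Complex_Main "HOL-Library.FuncSet"
begin

definition ell :: "nat \<Rightarrow> nat \<Rightarrow> nat" where
  "ell i n = card {v \<in> {0..<n} \<rightarrow>\<^sub>E {0::nat, 1, 2}. (\<Sum>j\<in>{0..<n}. v j) = i}"

end

theory Submission imports Defs begin

definition E :: "nat \<Rightarrow> int \<Rightarrow> nat" where
  "E n i = card {v \<in> {0..<n} \<rightarrow>\<^sub>E {0::nat,1,2}. int (\<Sum>j\<in>{0..<n}. v j) = i}"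

lemma ell_E: "ell i n = E n (int i)"
  unfolding ell_def E_def by (simp only: of_nat_eq_iff)

lemma card_split:
  assumes S: "finite S"
  shows "card {v \<in> {0..<Suc n} \<rightarrow>\<^sub>E S. Q v} = (\<Sum>a\<in>S. card {w \<in> {0..<n} \<rightarrow>\<^sub>E S. Q (w(n:=a))})"
proof -
  define A where "A a = {w \<in> {0..<n} \<rightarrow>\<^sub>E S. Q (w(n:=a))}" for a
  have eq: "{v \<in> {0..<Suc n} \<rightarrow>\<^sub>E S. Q v} = (\<Union>a\<in>S. (\<lambda>w. w(n:=a)) ` A a)"
  proof (intro equalityI subsetI)
    fix v assume v: "v \<in> {v \<in> {0..<Suc n} \<rightarrow>\<^sub>E S. Q v}"
    define w where "w = v(n:=undefined)"
    have "v n \<in> S" using v by (auto simp: PiE_iff)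
    moreover have "w \<in> {0..<n} \<rightarrow>\<^sub>E S" using v unfolding w_def by (auto simp: PiE_iff extensional_def)
    moreover have "w(n := v n) = v" unfolding w_def by simp
    ultimately show "v \<in> (\<Union>a\<in>S. (\<lambda>w. w(n:=a)) ` A a)" using v unfolding A_def
      by (intro UN_I[of "v n"]) (auto intro!: image_eqI[of v _ w])
  next
    fix v assume "v \<in> (\<Union>a\<in>S. (\<lambda>w. w(n:=a)) ` A a)"
    then obtain a w where a: "a \<in> S" and w: "w \<in> A a" and vw: "v = w(n:=a)" by auto
    show "v \<in> {v \<in> {0..<Suc n} \<rightarrow>\<^sub>E S. Q v}" using a w vw unfolding A_def
      by (auto simp: PiE_iff extensional_def)
  qed
  have fin: "finite (A a)" for a unfolding A_def
    using S by (intro finite_subset[OF _ finite_PiE[of "{0..<n}" "\<lambda>_. S"]]) auto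
  have inj: "inj_on (\<lambda>w. w(n:=a)) (A a)" for a
  proof (rule inj_onI)
    fix w w' assume "w \<in> A a" "w' \<in> A a" "w(n:=a) = w'(n:=a)"
    then show "w = w'" unfolding A_def
      by (metis (no_types, lifting) PiE_E atLeastLessThan_iff fun_upd_idem_iff fun_upd_upd less_irrefl mem_Collect_eq)
  qed
  have "card (\<Union>a\<in>S. (\<lambda>w. w(n:=a)) ` A a) = (\<Sum>a\<in>S. card ((\<lambda>w. w(n:=a)) ` A a))"
    using S fin by (intro card_UN_disjoint) (auto dest: fun_cong[of _ _ n])
  also have "\<dots> = (\<Sum>a\<in>S. card (A a))" using inj by (intro sum.cong refl card_image)
  finally show ?thesis using eq unfolding A_def by simp
qed

lemma E0: "E 0 i = (if i = 0 then 1 else 0)"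
  unfolding E_def by (auto simp: PiE_empty_domain)

lemma ESuc: "E (Suc n) i = E n i + E n (i-1) + E n (i-2)"
proof -
  have "E (Suc n) i = (\<Sum>a\<in>{0::nat,1,2}. card {w \<in> {0..<n} \<rightarrow>\<^sub>E {0::nat,1,2}.
      int (\<Sum>j\<in>{0..<Suc n}. (w(n:=a)) j) = i})"
    unfolding E_def by (rule card_split) simp
  also have "\<dots> = (\<Sum>a\<in>{0::nat,1,2}. E n (i - int a))"
  proof (intro sum.cong refl)
    fix a :: nat
    have "(\<Sum>j\<in>{0..<Suc n}. (w(n:=a)) j) = (\<Sum>j\<in>{0..<n}. w j) + a" for w :: "nat \<Rightarrow> nat"
    proof -
      have "(\<Sum>j\<in>{0..<n}. (w(n:=a)) j) = (\<Sum>j\<in>{0..<n}. w j)" by (intro sum.cong) auto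
      then show ?thesis by simp
    qed
    then show "card {w \<in> {0..<n} \<rightarrow>\<^sub>E {0::nat,1,2}. int (\<Sum>j\<in>{0..<Suc n}. (w(n:=a)) j) = i} = E n (i - int a)"
      unfolding E_def by (intro arg_cong[where f=card]) auto
  qed
  also have "\<dots> = E n i + E n (i-1) + E n (i-2)" by simp
  finally show ?thesis .
qed

lemma E_neg: "i < 0 \<Longrightarrow> E n i = 0"
proof -
  assume "i < 0"
  then have "{v \<in> {0..<n} \<rightarrow>\<^sub>E {0::nat,1,2}. int (\<Sum>j\<in>{0..<n}. v j) = i} = {}" by (auto simp del: of_nat_sum)
  then show ?thesis unfolding E_def by (metis card.empty)
qed

lemma E_sym: "E n (2 * int n - i) = E n i"
proof (induction n arbitrary: i)
  case 0 then show ?case by (simp add: E0)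
next
  case (Suc n)
  have "E (Suc n) (2 * int (Suc n) - i) = E n (2*int n - (i-2)) + E n (2*int n - (i-1)) + E n (2*int n - i)"
    unfolding ESuc by (simp add: algebra_simps)
  also have "\<dots> = E (Suc n) i" unfolding Suc.IH ESuc by simp
  finally show ?case .
qed

lemma E_pos: "0 \<le> i \<Longrightarrow> i \<le> 2 * int n \<Longrightarrow> E n i > 0"
proof (induction n arbitrary: i)
  case 0 then show ?case by (simp add: E0)
next
  case (Suc n)
  show ?case
  proof (cases "i \<le> 2 * int n")
    case True then show ?thesis using Suc by (simp add: ESuc)
  next
    case False
    then have "i - 1 = 2 * int n \<or> (0 \<le> i - 2 \<and> i - 2 \<le> 2 * int n)" using Suc.prems by auto
    then show ?thesis using Suc.IH[of "i-1"] Suc.IH[of "i-2"] by (auto simp: ESuc)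
  qed
qed

lemma E_deriv: "(k+1) * int (E n (k+1)) = (int n - k) * int (E n k) + (2 * int n - k + 1) * int (E n (k-1))"
proof (induction n arbitrary: k)
  case 0
  then show ?case by (auto simp: E0)
next
  case (Suc n)
  have h1: "(k+1) * int (E n (k+1)) = (int n - k) * int (E n k) + (2 * int n - k + 1) * int (E n (k-1))" by (rule Suc.IH)
  have h2: "k * int (E n k) = (int n - (k-1)) * int (E n (k-1)) + (2 * int n - (k-1) + 1) * int (E n (k-2))"
    using Suc.IH[of "k-1"] by (simp add: algebra_simps)
  have h3: "(k-1) * int (E n (k-1)) = (int n - (k-2)) * int (E n (k-2)) + (2 * int n - (k-2) + 1) * int (E n (k-3))"
    using Suc.IH[of "k-2"] by (simp add: algebra_simps)
  have e1: "E (Suc n) (k+1) = E n (k+1) + E n k + E n (k-1)" by (simp add: ESuc)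
  have e2: "E (Suc n) k = E n k + E n (k-1) + E n (k-2)" by (simp add: ESuc)
  have e3: "E (Suc n) (k-1) = E n (k-1) + E n (k-2) + E n (k-3)" by (simp add: ESuc)
  show ?case unfolding e1 e2 e3 using h1 h2 h3 by (simp add: algebra_simps)
qed

lemma E55: "E 5 5 = 51" and E54: "E 5 4 = 45"
  by (simp_all add: numeral_eq_Suc ESuc E0)

definition L :: "real \<Rightarrow> real" where "L x = 1 - 3/(4*x) + 1/(2*x^2)"
definition U :: "real \<Rightarrow> real" where "U x = x*(4*x+7)/(4*x^2+10*x+3)"
definition F :: "real \<Rightarrow> real \<Rightarrow> real" where "F x t = (x+1)*(2+t)/((x+2)*(1+2*t))"

lemma fr_le: assumes "b>0" "d>0" "a*d \<le> c*b" shows "a/b \<le> (c::real)/d"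
proof -
  have "a/b = (a*d)/(b*d)" using assms by simp
  also have "\<dots> \<le> (c*b)/(b*d)" using assms by (intro divide_right_mono) auto
  also have "\<dots> = c/d" using assms by simp
  finally show ?thesis .
qed

lemma L_eq: "x > 0 \<Longrightarrow> L x = (4*x^2-3*x+2)/(4*x^2)"
  unfolding L_def by (simp add: field_simps power2_eq_square)

lemma F_frac: assumes "b > 0" "b + 2*a > 0" "x \<ge> 0" shows "F x (a/b) = (x+1)*(2*b+a)/((x+2)*(b+2*a))"
proof -
  have "2 + a/b = (2*b+a)/b" "1 + 2*(a/b) = (b+2*a)/b" using assms by (simp_all add: field_simps)
  moreover have "\<And>P Q. (P/b)/(Q/b) = P/Q" using assms by (simp add: field_simps)
  ultimately show ?thesis unfolding F_def by (simp only: times_divide_eq_right)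
qed

lemma FU: assumes "x \<ge> 5" shows "F x (U x) = (x+1)*(4*x+1)/(4*x^2+8*x+1)"
proof -
  have d: "4*x^2+10*x+3 > 0" "4*x^2+8*x+1 > 0" "x*(4*x+7) \<ge> 0" using assms by (auto intro!: add_pos_nonneg)
  have d2: "(x+2)*((4*x^2+10*x+3)+2*(x*(4*x+7))) > 0" using d assms by (intro mult_pos_pos) (auto intro!: add_pos_nonneg)
  have "F x (U x) = (x+1)*(2*(4*x^2+10*x+3)+x*(4*x+7))/((x+2)*((4*x^2+10*x+3)+2*(x*(4*x+7))))"
    unfolding U_def by (intro F_frac; use d assms in linarith)
  also have "\<dots> = (x+1)*(4*x+1)/(4*x^2+8*x+1)"
    apply (subst frac_eq_eq)
    subgoal using d2 by (metis order_less_irrefl)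
    subgoal using d by (metis order_less_irrefl)
    by (simp add: algebra_simps power2_eq_square)
  finally show ?thesis .
qed

lemma P2: assumes "x \<ge> 5" shows "L (x+1) \<le> F x (U x)"
proof -
  have d: "4*x^2+8*x+1 > 0" using assms by (auto intro!: add_pos_nonneg)
  have e: "(4*x^2+5*x+3)*(4*x^2+8*x+1) \<le> (x+1)*(4*x+1)*(4*(x+1)^2)"
  proof -
    have "(x+1)*(4*x+1)*(4*(x+1)^2) - (4*x^2+5*x+3)*(4*x^2+8*x+1) = 4*x^2-x+1" by (simp add: algebra_simps power2_eq_square power3_eq_cube)
    moreover have "x^2 \<ge> 5*x" using assms unfolding power2_eq_square by (intro mult_right_mono) auto
    ultimately show ?thesis using assms by linarith
  qed
  have "L (x+1) = (4*(x+1)^2-3*(x+1)+2)/(4*(x+1)^2)" using assms by (subst L_eq) auto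
  also have "\<dots> = (4*x^2+5*x+3)/(4*(x+1)^2)" by (simp add: algebra_simps power2_eq_square)
  also have "\<dots> \<le> (x+1)*(4*x+1)/(4*x^2+8*x+1)" using d assms e
    by (intro fr_le) auto
  finally show ?thesis using FU assms by simp
qed
lemma P3: assumes "x \<ge> 5" shows "F x (L x) \<le> U (x+1)"
proof -
  have x2: "x^2 > 0" using assms by simp
  have "x*x \<ge> 5*x" using assms by (intro mult_right_mono) auto
  then have a: "4*x^2-3*x+2 > 0" using assms unfolding power2_eq_square by linarith
  have "F x (L x) = F x ((4*x^2-3*x+2)/(4*x^2))" using assms by (subst L_eq) auto
  also have "\<dots> = (x+1)*(2*(4*x^2)+(4*x^2-3*x+2))/((x+2)*(4*x^2+2*(4*x^2-3*x+2)))"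
    using x2 a assms by (intro F_frac) auto
  also have "\<dots> \<le> (x+1)*(4*(x+1)+7)/(4*(x+1)^2+10*(x+1)+3)"
  proof (rule fr_le)
    show "0 < (x+2)*(4*x^2+2*(4*x^2-3*x+2))" using x2 a assms by (intro mult_pos_pos) auto
    show "0 < 4*(x+1)^2+10*(x+1)+3" using assms by (auto intro!: add_pos_nonneg)
    have "(x+1)*(4*(x+1)+7) * ((x+2)*(4*x^2+2*(4*x^2-3*x+2)))
        - (x+1)*(2*(4*x^2)+(4*x^2-3*x+2)) * (4*(x+1)^2+10*(x+1)+3) = (x+1)*(8*x^2-41*x+54)"
      by (simp add: algebra_simps power2_eq_square)
    moreover have "(x-3)^2 \<ge> 0" by simp
    then have "8*x^2-41*x+54 > 0" using assms by (simp add: power2_eq_square algebra_simps)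
    then have "(x+1)*(8*x^2-41*x+54) > 0" using assms by (intro mult_pos_pos) auto
    ultimately show "(x+1)*(2*(4*x^2)+(4*x^2-3*x+2)) * (4*(x+1)^2+10*(x+1)+3)
        \<le> (x+1)*(4*(x+1)+7) * ((x+2)*(4*x^2+2*(4*x^2-3*x+2)))" by linarith
  qed
  also have "\<dots> = U (x+1)" unfolding U_def by simp
  finally show ?thesis .
qed

lemma P1: assumes "x \<ge> 5" shows "x/(x+1) \<le> L x"
proof -
  have x2: "x^2 > 0" using assms by simp
  have "x/(x+1) \<le> (4*x^2-3*x+2)/(4*x^2)"
  proof (rule fr_le)
    show "0 < x+1" "0 < 4*x^2" using assms by auto
    have "(4*x^2-3*x+2)*(x+1) - x*(4*x^2) = x^2-x+2" by (simp add: algebra_simps power2_eq_square)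
    moreover have "x^2 \<ge> 5*x" using assms unfolding power2_eq_square by (intro mult_right_mono) auto
    ultimately show "x*(4*x^2) \<le> (4*x^2-3*x+2)*(x+1)" using assms by linarith
  qed
  then show ?thesis using assms L_eq by simp
qed

lemma U_le1: assumes "x \<ge> 5" shows "U x \<le> 1"
  unfolding U_def using assms
  by (subst divide_le_eq_1_pos) (auto intro!: add_pos_nonneg simp: algebra_simps power2_eq_square)

lemma F_anti: assumes "0 \<le> s" "s \<le> t" "x \<ge> 0" shows "F x t \<le> F x s"
proof -
  have "(2+t)/(1+2*t) \<le> (2+s)/(1+2*s)"
  proof (rule fr_le)
    show "0 < 1+2*t" "0 < 1+2*s" using assms by auto
    show "(2+t)*(1+2*s) \<le> (2+s)*(1+2*t)" using assms by (simp add: algebra_simps)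
  qed
  then have "(x+1)/(x+2) * ((2+t)/(1+2*t)) \<le> (x+1)/(x+2) * ((2+s)/(1+2*s))"
    using assms by (intro mult_left_mono) auto
  then show ?thesis unfolding F_def by simp
qed

lemma L_pos: "x \<ge> 5 \<Longrightarrow> L x \<ge> 0"
  using P1[of x] by (smt (verit) divide_nonneg_nonneg)

definition tt :: "nat \<Rightarrow> real" where "tt n = real (E n (int n - 1)) / real (E n (int n))"

lemma rec0: "E (Suc n) (int (Suc n)) = E n (int n) + 2 * E n (int n - 1)"
proof -
  have "E n (int n + 1) = E n (2 * int n - (int n - 1))" by (simp add: algebra_simps)
  also have "\<dots> = E n (int n - 1)" by (rule E_sym)
  finally have "E n (int n + 1) = E n (int n - 1)" .
  then show ?thesis unfolding of_nat_Suc add.commute[of 1 "int n"] using ESuc[of n "int n + 1"] by simp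
qed

lemma rec1: "E (Suc n) (int (Suc n) - 1) = E n (int n) + E n (int n - 1) + E n (int n - 2)"
  using ESuc[of n "int n"] by simp

lemma derivn: "real n * real (E n (int n)) = real (E n (int n - 1)) + (real n + 2) * real (E n (int n - 2))"
proof -
  have "(int n - 1 + 1) * int (E n (int n - 1 + 1)) = (int n - (int n - 1)) * int (E n (int n - 1)) + (2 * int n - (int n - 1) + 1) * int (E n (int n - 1 - 1))"
    by (rule E_deriv)
  then have "int n * int (E n (int n)) = int (E n (int n - 1)) + (int n + 2) * int (E n (int n - 2))"
    by (simp add: algebra_simps)
  then have "real_of_int (int n * int (E n (int n))) = real_of_int (int (E n (int n - 1)) + (int n + 2) * int (E n (int n - 2)))"
    by simp
  then show ?thesis by simp
qed

lemma tt_step: assumes "n \<ge> 1" shows "tt (Suc n) = F (real n) (tt n)"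
proof -
  define a where "a = real (E n (int n))"
  define b where "b = real (E n (int n - 1))"
  define c where "c = real (E n (int n - 2))"
  have apos: "a > 0" unfolding a_def using E_pos[of "int n" n] by simp
  have bpos: "b \<ge> 0" unfolding b_def by simp
  have D: "real n * a = b + (real n + 2) * c" unfolding a_def b_def c_def by (rule derivn)
  have "tt (Suc n) = (a+b+c)/(a+2*b)" unfolding tt_def rec0 rec1 a_def b_def c_def by simp
  also have "\<dots> = (real n+1)*(2*a+b)/((real n+2)*(a+2*b))"
  proof (subst frac_eq_eq)
    show "a + 2*b \<noteq> 0" "(real n+2)*(a+2*b) \<noteq> 0" using apos bpos by auto
    have "(real n + 2)*(a+b+c) = (real n + 1)*(2*a+b)" using D by (simp add: algebra_simps)
    then have "(a+b+c)*((real n+2)*(a+2*b)) = ((real n + 1)*(2*a+b))*(a+2*b)"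
      by (metis mult.assoc mult.commute)
    then show "(a+b+c)*((real n+2)*(a+2*b)) = (real n+1)*(2*a+b)*(a+2*b)" by simp
  qed
  also have "\<dots> = F (real n) (b/a)" using apos bpos by (intro F_frac[symmetric]) auto
  also have "b/a = tt n" unfolding tt_def a_def b_def ..
  finally show ?thesis .
qed

lemma tt_bounds: "n \<ge> 5 \<Longrightarrow> L (real n) \<le> tt n \<and> tt n \<le> U (real n)"
proof (induction n rule: nat_induct_at_least)
  case base
  have "tt 5 = 45/51" unfolding tt_def using E55 E54 by simp
  then show ?case unfolding L_def U_def by simp
next
  case (Suc n)
  have x5: "real n \<ge> 5" using Suc by simp
  have t0: "tt n \<ge> 0" using Suc.IH L_pos[OF x5] by linarith
  have eq: "tt (Suc n) = F (real n) (tt n)" using Suc by (intro tt_step) auto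
  have r: "real (Suc n) = real n + 1" by simp
  have "L (real n + 1) \<le> F (real n) (U (real n))" using P2[OF x5] .
  also have "\<dots> \<le> F (real n) (tt n)" using t0 Suc.IH x5 by (intro F_anti) auto
  finally have c1: "L (real n + 1) \<le> F (real n) (tt n)" .
  then have 1: "L (real (Suc n)) \<le> tt (Suc n)" unfolding r eq .
  have "F (real n) (tt n) \<le> F (real n) (L (real n))" using L_pos[OF x5] Suc.IH x5 by (intro F_anti) auto
  also have "\<dots> \<le> U (real n + 1)" using P3[OF x5] .
  finally have c2: "F (real n) (tt n) \<le> U (real n + 1)" .
  then have 2: "tt (Suc n) \<le> U (real (Suc n))" unfolding r eq .
  show ?case using 1 2 ..
qed

theorem mainTheorem16:
  fixes n :: nat
  assumes "n \<ge> 5"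
  shows "(real n + 2) / real n \<le> real (ell (n - 1) n) / real (ell (n - 2) n)
         \<and> real (ell (n - 1) n) / real (ell (n - 2) n) \<le> (4 * real n + 7) / (4 * real n - 2)"
proof -
  define a where "a = real (E n (int n))"
  define b where "b = real (E n (int n - 1))"
  define c where "c = real (E n (int n - 2))"
  have x5: "real n \<ge> 5" using assms by simp
  have e1: "ell (n - 1) n = E n (int n - 1)" using assms by (simp add: ell_E of_nat_diff)
  have e2: "ell (n - 2) n = E n (int n - 2)" using assms by (simp add: ell_E of_nat_diff)
  have apos: "a > 0" unfolding a_def using E_pos[of "int n" n] by simp
  have cpos: "c > 0" unfolding c_def using E_pos[of "int n - 2" n] assms by simp
  have D: "real n * a = b + (real n + 2) * c" unfolding a_def b_def c_def by (rule derivn)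
  have tb: "tt n = b / a" unfolding tt_def a_def b_def ..
  have lo: "real n / (real n + 1) \<le> b / a" using P1[OF x5] tt_bounds[OF assms] tb by simp
  have up: "b / a \<le> real n * (4 * real n + 7) / (4 * real n^2 + 10 * real n + 3)"
    using tt_bounds[OF assms] tb unfolding U_def by simp
  have lo': "real n * a \<le> b * (real n + 1)" using lo apos x5 by (simp add: field_simps)
  have up': "b * (4 * real n^2 + 10 * real n + 3) \<le> real n * (4 * real n + 7) * a"
  proof -
    have "0 < 4 * real n^2 + 10 * real n + 3" using x5 by (auto intro!: add_pos_nonneg)
    then show ?thesis using up apos by (simp add: field_simps)
  qed
  have g1: "(real n + 2) / real n \<le> b / c"
  proof (rule fr_le)
    show "0 < real n" "0 < c" using x5 cpos by auto
    show "(real n + 2) * c \<le> b * real n" using lo' D by (simp add: algebra_simps)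
  qed
  have g2: "b / c \<le> (4 * real n + 7) / (4 * real n - 2)"
  proof (rule fr_le)
    show "0 < c" "0 < 4 * real n - 2" using x5 cpos by auto
    have "(real n + 2) * ((4 * real n + 7) * c - b * (4 * real n - 2))
        = real n * (4 * real n + 7) * a - b * (4 * real n^2 + 10 * real n + 3)"
    proof -
      have "(real n + 2) * ((4 * real n + 7) * c) = (4 * real n + 7) * (real n * a - b)"
        using D by (simp add: algebra_simps)
      then show ?thesis by (simp add: algebra_simps power2_eq_square)
    qed
    then have "0 \<le> (real n + 2) * ((4 * real n + 7) * c - b * (4 * real n - 2))" using up' by simp
    then have "0 \<le> (4 * real n + 7) * c - b * (4 * real n - 2)" using x5
      by (simp add: zero_le_mult_iff)
    then show "b * (4 * real n - 2) \<le> (4 * real n + 7) * c" by simp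
  qed
  show ?thesis unfolding e1 e2 using g1 g2 unfolding b_def c_def by simp
qed

end
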